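(* For every $d\ge 2$ there is a number $M_d>0$ such that the following holds: if $H_1,\dots,H_d$ are mutually orthogonal affine hyperplanes in $\mathbb{R}^d$, then the set $\Gamma=\{\gamma(t):t\ge M_d\}$ intersects some $H_i$ in at most one point.
   Context: $\gamma:\mathbb{R}\to\mathbb{R}^d$ denotes the moment curve $\gamma(t)=(t,t^2,\dots,t^d)$. Affine hyperplanes are mutually orthogonal if their normal vectors are pairwise orthogonal. *)

theory Defs
  imports Main Complex_Main
begin

text \<open>Points of R^d are represented as functions nat => real whose coordinates
  0..d-1 are the usual coordinates 1..d, and which vanish from index d on.\<close>

definition in_Rd :: "nat \<Rightarrow> (nat \<Rightarrow> real) \<Rightarrow> bool" where
  "in_Rd d x \<longleftrightarrow> (\<forall>j\<ge>d. x j = 0)"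

definition moment_curve :: "nat \<Rightarrow> real \<Rightarrow> (nat \<Rightarrow> real)" where
  "moment_curve d t = (\<lambda>j. if j < d then t ^ (Suc j) else 0)"

text \<open>The affine hyperplane {x in R^d. a . x = b}; it is a hyperplane when the
  normal vector a (restricted to coordinates < d) is nonzero.\<close>
definition hyperplane :: "nat \<Rightarrow> (nat \<Rightarrow> real) \<Rightarrow> real \<Rightarrow> (nat \<Rightarrow> real) set" where
  "hyperplane d a b = {x. in_Rd d x \<and> (\<Sum>j<d. a j * x j) = b}"

definition inner_d :: "nat \<Rightarrow> (nat \<Rightarrow> real) \<Rightarrow> (nat \<Rightarrow> real) \<Rightarrow> real" where
  "inner_d d u v = (\<Sum>j<d. u j * v j)"

end

theory Submission imports Defs "Jordan_Normal_Form.Determinant" begin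
lemma orth_cols:
  fixes u :: "nat \<Rightarrow> nat \<Rightarrow> real"
  assumes "\<forall>i<d. \<forall>k<d. (\<Sum>j<d. u i j * u k j) = (if i = k then 1 else 0)"
  shows "\<forall>j<d. \<forall>l<d. (\<Sum>i<d. u i j * u i l) = (if j = l then 1 else 0)"
proof -
  define A where "A = mat d d (\<lambda>(i,j). u i j)"
  have A: "A \<in> carrier_mat d d" and B: "transpose_mat A \<in> carrier_mat d d" unfolding A_def by auto
  have "A * transpose_mat A = 1\<^sub>m d"
  proof (rule eq_matI)
    fix i k assume "i < dim_row (1\<^sub>m d)" "k < dim_col (1\<^sub>m d)"
    hence ik: "i < d" "k < d" by auto
    have "(A * transpose_mat A) $$ (i,k) = (\<Sum>j<d. u i j * u k j)"
      using ik unfolding A_def by (auto simp: scalar_prod_def lessThan_atLeast0 intro!: sum.cong)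
    thus "(A * transpose_mat A) $$ (i,k) = 1\<^sub>m d $$ (i,k)" using assms ik by simp
  qed (auto simp: A_def)
  hence "transpose_mat A * A = 1\<^sub>m d" using mat_mult_left_right_inverse[OF A B] by blast
  show ?thesis
  proof (intro allI impI)
    fix j l assume jl: "j < d" "l < d"
    have "(transpose_mat A * A) $$ (j,l) = (\<Sum>i<d. u i j * u i l)"
      using jl unfolding A_def by (auto simp: scalar_prod_def lessThan_atLeast0 intro!: sum.cong)
    thus "(\<Sum>i<d. u i j * u i l) = (if j = l then 1 else 0)"
      using \<open>transpose_mat A * A = 1\<^sub>m d\<close> jl by simp
  qed
qed

lemma poly_deriv:
  fixes c :: "nat \<Rightarrow> real"
  shows "((\<lambda>t. \<Sum>j<d. c j * t ^ Suc j) has_real_derivative (\<Sum>j<d. c j * (real (Suc j) * x ^ j))) (at x)"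
proof -
  have "((\<lambda>t. c j * t ^ Suc j) has_real_derivative c j * (real (Suc j) * x ^ j)) (at x)" for j
    using DERIV_cmult[OF DERIV_pow[of "Suc j" x], of "c j"] by simp
  thus ?thesis by (intro DERIV_sum) auto
qed

lemma inj_from_deriv:
  fixes c :: "nat \<Rightarrow> real"
  assumes D: "\<And>t. t \<ge> M \<Longrightarrow> (\<Sum>j<d. c j * (real (Suc j) * t ^ j)) \<noteq> 0"
    and s: "s \<ge> M" and t: "t \<ge> M"
    and eq: "(\<Sum>j<d. c j * s ^ Suc j) = (\<Sum>j<d. c j * t ^ Suc j)"
  shows "s = t"
proof (rule ccontr)
  let ?f = "\<lambda>t. \<Sum>j<d. c j * t ^ Suc j"
  have gen: "False" if "p < q" "p \<ge> M" "?f p = ?f q" for p q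
  proof -
    have "\<exists>z. p < z \<and> z < q \<and> DERIV ?f z :> 0"
      apply (rule Rolle[OF that(1) that(3)])
      apply (intro continuous_intros)
      using poly_deriv by (auto simp: real_differentiable_def)
    then obtain z where z: "p < z" "z < q" "DERIV ?f z :> 0" by blast
    have "(\<Sum>j<d. c j * (real (Suc j) * z ^ j)) = 0"
      using DERIV_unique[OF poly_deriv z(3)] .
    with D[of z] z that show False by auto
  qed
  assume "s \<noteq> t"
  hence "s < t \<or> t < s" by auto
  thus False using gen s t eq by metis
qed

lemma deriv_nonzero:
  fixes a :: "nat \<Rightarrow> real"
  assumes m: "m \<ge> 1" and S: "(\<Sum>j<Suc m. (a j)^2) > 0"
    and big: "real (Suc m) * (a m)^2 \<ge> (\<Sum>j<Suc m. (a j)^2)"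
    and t: "t \<ge> real (Suc m) * real (Suc m)"
  shows "(\<Sum>j<Suc m. a j * (real (Suc j) * t ^ j)) \<noteq> 0"
proof -
  define S where "S = (\<Sum>j<Suc m. (a j)^2)"
  define N where "N = sqrt S"
  define d where "d = real (Suc m)"
  have d1: "d \<ge> 2" using m by (simp add: d_def)
  have N0: "N > 0" using S by (simp add: N_def S_def)
  have "(1::real) \<le> d*d" using mult_mono[of 1 d 1 d] d1 by simp
  hence t1: "t \<ge> 1" using t by (simp add: d_def)
  have aj: "\<bar>a j\<bar> \<le> N" if "j < Suc m" for j
  proof -
    have "(a j)^2 \<le> S" unfolding S_def
      by (rule member_le_sum[of j "{..<Suc m}" "\<lambda>j. (a j)^2"]) (use that in auto)
    thus ?thesis unfolding N_def by (metis real_sqrt_abs real_sqrt_le_mono)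
  qed
  have am: "\<bar>a m\<bar> \<ge> N / d"
  proof -
    have "S / d^2 \<le> S / d" using S d1 unfolding S_def
      by (intro divide_left_mono) (auto simp: power2_eq_square)
    also have "\<dots> \<le> (a m)^2" using big d1 unfolding S_def d_def by (simp add: field_simps)
    finally have "sqrt (S / d^2) \<le> sqrt ((a m)^2)" by (rule real_sqrt_le_mono)
    thus ?thesis using d1 unfolding N_def by (simp add: real_sqrt_divide)
  qed
  have rest: "\<bar>\<Sum>j<m. a j * (real (Suc j) * t ^ j)\<bar> \<le> real m * (d * N * t^(m-1))"
  proof -
    have "\<bar>\<Sum>j<m. a j * (real (Suc j) * t ^ j)\<bar> \<le> (\<Sum>j<m. \<bar>a j * (real (Suc j) * t ^ j)\<bar>)"
      by (rule sum_abs)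
    also have "\<dots> \<le> (\<Sum>j<m. d * N * t^(m-1))"
    proof (rule sum_mono)
      fix j assume j: "j \<in> {..<m}"
      have "\<bar>a j * (real (Suc j) * t ^ j)\<bar> = \<bar>a j\<bar> * real (Suc j) * t ^ j" using t1
        by (simp add: abs_mult)
      also have "\<dots> \<le> N * d * t^(m-1)"
        apply (intro mult_mono)
        using aj[of j] j t1 N0 by (auto simp: d_def intro!: power_increasing)
      finally show "\<bar>a j * (real (Suc j) * t ^ j)\<bar> \<le> d * N * t^(m-1)" by (simp add: mult_ac)
    qed
    finally show ?thesis by simp
  qed
  have lead: "\<bar>a m * (real (Suc m) * t ^ m)\<bar> \<ge> N * t^m"
  proof -
    have "\<bar>a m * (real (Suc m) * t ^ m)\<bar> = \<bar>a m\<bar> * d * t^m" using t1 by (simp add: abs_mult d_def)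
    moreover have "\<bar>a m\<bar> * d \<ge> N" using am d1 by (simp add: field_simps)
    ultimately show ?thesis using t1 by (simp add: mult_right_mono)
  qed
  have tm: "t^m = t * t^(m-1)" using m by (metis One_nat_def Suc_pred less_eq_Suc_le power_Suc)
  have "real m * (d * N * t^(m-1)) < N * t^m"
  proof -
    have "real m * d < d * d" using d_def by simp
    also have "\<dots> \<le> t" using t d_def by simp
    finally have "real m * d * (N * t^(m-1)) < t * (N * t^(m-1))"
      using N0 t1 by (intro mult_strict_right_mono) auto
    thus ?thesis using tm by (simp add: mult_ac)
  qed
  moreover have "(\<Sum>j<Suc m. a j * (real (Suc j) * t ^ j)) = a m * (real (Suc m) * t ^ m) + (\<Sum>j<m. a j * (real (Suc j) * t ^ j))"
    by simp
  ultimately show ?thesis using rest lead by linarith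
qed

lemma good_row:
  fixes a :: "nat \<Rightarrow> nat \<Rightarrow> real"
  assumes d: "d \<ge> 1" and nz: "\<forall>i<d. \<exists>j<d. a i j \<noteq> 0"
    and orth: "\<forall>i<d. \<forall>k<d. i \<noteq> k \<longrightarrow> (\<Sum>j<d. a i j * a k j) = 0"
  shows "\<exists>i<d. real d * (a i (d-1))^2 \<ge> (\<Sum>j<d. (a i j)^2) \<and> (\<Sum>j<d. (a i j)^2) > 0"
proof -
  define S where "S i = (\<Sum>j<d. (a i j)^2)" for i
  have S0: "S i > 0" if id: "i < d" for i
  proof -
    obtain j where j: "j < d" "a i j \<noteq> 0" using nz id by blast
    have "(a i j)^2 \<le> S i" unfolding S_def
      by (rule member_le_sum[of j "{..<d}" "\<lambda>j. (a i j)^2"]) (use j in auto)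
    moreover have "(a i j)^2 > 0" using j by simp
    ultimately show ?thesis by linarith
  qed
  define u where "u i j = a i j / sqrt (S i)" for i j
  have on: "\<forall>i<d. \<forall>k<d. (\<Sum>j<d. u i j * u k j) = (if i = k then 1 else 0)"
  proof (intro allI impI)
    fix i k assume ik: "i < d" "k < d"
    have "(\<Sum>j<d. u i j * u k j) = (\<Sum>j<d. a i j * a k j) / (sqrt (S i) * sqrt (S k))"
      unfolding u_def by (simp add: sum_divide_distrib)
    also have "\<dots> = (if i = k then 1 else 0)"
    proof (cases "i = k")
      case True
      have "(\<Sum>j<d. a i j * a k j) = S i" using True by (simp add: S_def power2_eq_square)
      moreover have "sqrt (S i) * sqrt (S k) = S i" using True S0[OF ik(1)] by simp
      ultimately show ?thesis using True S0[OF ik(1)] by simp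
    next
      case False thus ?thesis using orth ik by simp
    qed
    finally show "(\<Sum>j<d. u i j * u k j) = (if i = k then 1 else 0)" .
  qed
  have col: "(\<Sum>i<d. u i (d-1) * u i (d-1)) = 1" using orth_cols[OF on] d by simp
  have "\<exists>i<d. real d * (u i (d-1))^2 \<ge> 1"
  proof (rule ccontr)
    assume "\<not> ?thesis"
    hence "\<forall>i<d. (u i (d-1))^2 < 1 / real d" using d by (auto simp: field_simps)
    hence "(\<Sum>i<d. u i (d-1) * u i (d-1)) < (\<Sum>i<d. 1 / real d)"
      using d by (intro sum_strict_mono) (auto simp: power2_eq_square lessThan_empty_iff)
    thus False using col d by simp
  qed
  then obtain i where i: "i < d" "real d * (u i (d-1))^2 \<ge> 1" by blast
  have "(u i (d-1))^2 = (a i (d-1))^2 / S i" using S0[OF i(1)] unfolding u_def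
    by (simp add: power_divide)
  moreover have "1 * S i \<le> (real d * (u i (d-1))^2) * S i"
    using i S0[OF i(1)] by (intro mult_right_mono) auto
  ultimately have "real d * (a i (d-1))^2 \<ge> S i" using S0[OF i(1)] by (simp add: field_simps)
  thus ?thesis using i S0 unfolding S_def by blast
qed

theorem lemma2p2:
  shows "\<forall>d::nat. d \<ge> 2 \<longrightarrow> (\<exists>M::real. M > 0 \<and>
    (\<forall>(a :: nat \<Rightarrow> nat \<Rightarrow> real) (b :: nat \<Rightarrow> real).
      (\<forall>i<d. \<exists>j<d. a i j \<noteq> 0) \<and>
      (\<forall>i<d. \<forall>k<d. i \<noteq> k \<longrightarrow> inner_d d (a i) (a k) = 0)
      \<longrightarrow> (\<exists>i<d. \<forall>x y.
             x \<in> moment_curve d ` {M..} \<inter> hyperplane d (a i) (b i) \<longrightarrow>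
             y \<in> moment_curve d ` {M..} \<inter> hyperplane d (a i) (b i) \<longrightarrow> x = y)))"
proof (intro allI impI)
  fix d :: nat assume d2: "d \<ge> 2"
  then obtain m where dm: "d = Suc m" and m1: "m \<ge> 1" by (metis Suc_le_D Suc_le_mono one_add_one plus_1_eq_Suc)
  define M where "M = real d * real d"
  show "\<exists>M::real. M > 0 \<and>
    (\<forall>(a :: nat \<Rightarrow> nat \<Rightarrow> real) (b :: nat \<Rightarrow> real).
      (\<forall>i<d. \<exists>j<d. a i j \<noteq> 0) \<and>
      (\<forall>i<d. \<forall>k<d. i \<noteq> k \<longrightarrow> inner_d d (a i) (a k) = 0)
      \<longrightarrow> (\<exists>i<d. \<forall>x y.
             x \<in> moment_curve d ` {M..} \<inter> hyperplane d (a i) (b i) \<longrightarrow>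
             y \<in> moment_curve d ` {M..} \<inter> hyperplane d (a i) (b i) \<longrightarrow> x = y))"
  proof (rule exI[of _ M], intro conjI allI impI)
    show "M > 0" using d2 by (simp add: M_def)
    fix a :: "nat \<Rightarrow> nat \<Rightarrow> real" and b :: "nat \<Rightarrow> real"
    assume H: "(\<forall>i<d. \<exists>j<d. a i j \<noteq> 0) \<and>
      (\<forall>i<d. \<forall>k<d. i \<noteq> k \<longrightarrow> inner_d d (a i) (a k) = 0)"
    have "\<exists>i<d. real d * (a i (d-1))^2 \<ge> (\<Sum>j<d. (a i j)^2) \<and> (\<Sum>j<d. (a i j)^2) > 0"
      using H d2 by (intro good_row) (auto simp: inner_d_def)
    then obtain i where i: "i < d" "real d * (a i (d-1))^2 \<ge> (\<Sum>j<d. (a i j)^2)"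
      "(\<Sum>j<d. (a i j)^2) > 0" by blast
    have D: "(\<Sum>j<d. a i j * (real (Suc j) * t ^ j)) \<noteq> 0" if "t \<ge> M" for t
      using deriv_nonzero[of m "a i" t] m1 i that unfolding M_def dm by simp
    have onc: "(\<Sum>j<d. a i j * s ^ Suc j) = b i"
      if "moment_curve d s \<in> hyperplane d (a i) (b i)" for s
    proof -
      have "(\<Sum>j<d. a i j * moment_curve d s j) = b i" using that by (simp add: hyperplane_def)
      moreover have "(\<Sum>j<d. a i j * moment_curve d s j) = (\<Sum>j<d. a i j * s ^ Suc j)"
        by (rule sum.cong) (auto simp: moment_curve_def)
      ultimately show ?thesis by simp
    qed
    show "\<exists>i<d. \<forall>x y.
             x \<in> moment_curve d ` {M..} \<inter> hyperplane d (a i) (b i) \<longrightarrow>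
             y \<in> moment_curve d ` {M..} \<inter> hyperplane d (a i) (b i) \<longrightarrow> x = y"
    proof (intro exI[of _ i] conjI allI impI)
      show "i < d" by fact
      fix x y
      assume x: "x \<in> moment_curve d ` {M..} \<inter> hyperplane d (a i) (b i)"
        and y: "y \<in> moment_curve d ` {M..} \<inter> hyperplane d (a i) (b i)"
      from x obtain s where s: "s \<ge> M" "x = moment_curve d s" by auto
      from y obtain t where t: "t \<ge> M" "y = moment_curve d t" by auto
      have "(\<Sum>j<d. a i j * s ^ Suc j) = (\<Sum>j<d. a i j * t ^ Suc j)"
        using onc x y s t by simp
      hence "s = t" using inj_from_deriv[OF D s(1) t(1)] by blast
      thus "x = y" using s t by simp
    qed
  qed
qed

end
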